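(* Let $(E,\rho,[\cdot,\cdot],H)$ be an H-twisted Lie algebroid over a smooth manifold $M$. Set $V_1:=\Gamma(\ker\rho)$, $V_0:=\Gamma(E)$, let $\partial:V_1\hookrightarrow V_0$ be the inclusion, $l_2(\phi,\psi):=[\phi,\psi]$ for $\phi,\psi\in V_0$, $\phi\triangleright\psi:=\nabla^E_\phi\psi=[\phi,\psi]$ for $\phi\in V_0,\psi\in V_1$, and $l_3(\psi_0,\psi_1,\psi_2):=H(\psi_0,\psi_1,\psi_2)$. Then $(V_1\xrightarrow{\partial}V_0,l_2,\triangleright,l_3)$ is a two-term $L_\infty$-algebra.
   Context: An H-twisted Lie algebroid $(E,\rho,[\cdot,\cdot],H)$ over $M$ consists of a smooth vector bundle $E\to M$, a bundle map $\rho:E\to TM$, a skew-symmetric $\mathbb{R}$-bilinear bracket on $\Gamma(E)$, and $H\in\Gamma(\wedge^3E^*\otimes E)$ with $\rho\circ H=0$, such that for all $\phi,\psi,\psi_1,\psi_2\in\Gamma(E)$, $f\in C^\infty(M)$: (1) $[\phi,[\psi_1,\psi_2]]=[[\phi,\psi_1],\psi_2]+[\psi_1,[\phi,\psi_2]]+H(\phi,\psi_1,\psi_2)$; (2) $[\phi,f\psi]=\rho(\phi)[f]\psi+f[\phi,\psi]$; (3) $(DH)(\psi_0,\dots,\psi_3):=\sum_{i=0}^3(-1)^i[\psi_i,H(\psi_0,\dots,\widehat{\psi_i},\dots,\psi_3)]+\sum_{i<j}(-1)^{i+j}H([\psi_i,\psi_j],\psi_0,\dots,\widehat{\psi_i},\dots,\widehat{\psi_j},\dots,\psi_3)=0$.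 Here $\Gamma(\ker\rho)$ is the set of $\psi\in\Gamma(E)$ with $\rho(\psi)=0$; for such $\psi$ and $\phi\in\Gamma(E)$ one sets $\nabla^E_\phi\psi:=[\phi,\psi]$. A two-term $L_\infty$-algebra is a two-term complex of vector spaces $0\to V_1\xrightarrow{\partial}V_0\to0$ together with maps $[\cdot,\cdot]=l_2:V_0\wedge V_0\to V_0$, $\triangleright:V_0\otimes V_1\to V_1$, $l_3:V_0\wedge V_0\wedge V_0\to V_1$ such that for all $\phi_i\in V_0$, $f,g\in V_1$: (a) $[\phi,\partial f]=\partial(\phi\triangleright f)$; (b) $(\partial f)\triangleright g+(\partial g)\triangleright f=0$; (c) $[\phi_1,[\phi_2,\phi_3]]+[\phi_2,[\phi_3,\phi_1]]+[\phi_3,[\phi_1,\phi_2]]=\partial l_3(\phi_1,\phi_2,\phi_3)$; (d) $\phi_1\triangleright(\phi_2\triangleright f)-\phi_2\triangleright(\phi_1\triangleright f)-[\phi_1,\phi_2]\triangleright f=l_3(\phi_1,\phi_2,\partial f)$; (e) for all $\phi_0,\dots,\phi_3\in V_0$: $\sum_{i=0}^3(-1)^i\phi_i\triangleright l_3(\phi_0,\dots,\widehat{\phi_i},\dots,\phi_3)+\sum_{i<j}(-1)^{i+j}l_3([\phi_i,\phi_j],\phi_0,\dots,\widehat{\phi_i},\dots,\widehat{\phi_j},\dots,\phi_3)=0$. *)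

theory Defs
  imports Complex_Main
begin

text \<open>Algebraic model of the smooth data.
  'f plays the role of C^infinity(M) (a commutative real algebra),
  'e plays the role of Gamma(E) (a real vector space which is a C^infinity(M)-module
  via sm), and vector fields on M are modelled as derivations of C^infinity(M).\<close>

definition is_derivation :: "('f::{comm_ring_1,real_algebra_1} \<Rightarrow> 'f) \<Rightarrow> bool" where
  "is_derivation X \<longleftrightarrow>
     (\<forall>f g. X (f + g) = X f + X g) \<and> (\<forall>c f. X (c *\<^sub>R f) = c *\<^sub>R X f) \<and>
     (\<forall>f g. X (f * g) = f * X g + g * X f)"

definition fmodule :: "('f::{comm_ring_1,real_algebra_1} \<Rightarrow> 'e::real_vector \<Rightarrow> 'e) \<Rightarrow> bool" where
  "fmodule sm \<longleftrightarrow>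
     (\<forall>e. sm 1 e = e) \<and> (\<forall>f g e. sm (f * g) e = sm f (sm g e)) \<and>
     (\<forall>f g e. sm (f + g) e = sm f e + sm g e) \<and> (\<forall>f e e'. sm f (e + e') = sm f e + sm f e') \<and>
     (\<forall>c e. sm (of_real c) e = c *\<^sub>R e)"

text \<open>Anchor: a C^infinity-linear bundle map E -> TM, i.e. a C^infinity-linear map from
  sections to vector fields (derivations).\<close>
definition anchor_map :: "('f::{comm_ring_1,real_algebra_1} \<Rightarrow> 'e::real_vector \<Rightarrow> 'e)
     \<Rightarrow> ('e \<Rightarrow> 'f \<Rightarrow> 'f) \<Rightarrow> bool" where
  "anchor_map sm \<rho> \<longleftrightarrow> (\<forall>e. is_derivation (\<rho> e)) \<and>
     (\<forall>e e' g. \<rho> (e + e') g = \<rho> e g + \<rho> e' g) \<and> (\<forall>f e g. \<rho> (sm f e) g = f * \<rho> e g)"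

text \<open>H in Gamma(wedge^3 E^* tensor E): C^infinity-trilinear and alternating.\<close>
definition tensor3_alt :: "('f::{comm_ring_1,real_algebra_1} \<Rightarrow> 'e::real_vector \<Rightarrow> 'e)
     \<Rightarrow> ('e \<Rightarrow> 'e \<Rightarrow> 'e \<Rightarrow> 'e) \<Rightarrow> bool" where
  "tensor3_alt sm H \<longleftrightarrow>
     (\<forall>a b c. H a b c = - H b a c) \<and> (\<forall>a b c. H a b c = - H a c b) \<and>
     (\<forall>a b c d. H a b (c + d) = H a b c + H a b d) \<and>
     (\<forall>f a b c. H a b (sm f c) = sm f (H a b c))"

definition DH_zero :: "('e::real_vector \<Rightarrow> 'e \<Rightarrow> 'e) \<Rightarrow> ('e \<Rightarrow> 'e \<Rightarrow> 'e \<Rightarrow> 'e) \<Rightarrow> bool" where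
  "DH_zero br H \<longleftrightarrow> (\<forall>p0 p1 p2 p3.
      br p0 (H p1 p2 p3) - br p1 (H p0 p2 p3) + br p2 (H p0 p1 p3) - br p3 (H p0 p1 p2)
      - H (br p0 p1) p2 p3 + H (br p0 p2) p1 p3 - H (br p0 p3) p1 p2
      - H (br p1 p2) p0 p3 + H (br p1 p3) p0 p2 - H (br p2 p3) p0 p1 = 0)"

definition H_twisted_Lie_algebroid ::
  "('f::{comm_ring_1,real_algebra_1} \<Rightarrow> 'e::real_vector \<Rightarrow> 'e) \<Rightarrow> ('e \<Rightarrow> 'f \<Rightarrow> 'f)
   \<Rightarrow> ('e \<Rightarrow> 'e \<Rightarrow> 'e) \<Rightarrow> ('e \<Rightarrow> 'e \<Rightarrow> 'e \<Rightarrow> 'e) \<Rightarrow> bool" where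
  "H_twisted_Lie_algebroid sm \<rho> br H \<longleftrightarrow>
     fmodule sm \<and> anchor_map sm \<rho> \<and> tensor3_alt sm H \<and>
     (\<forall>a b. br a b = - br b a) \<and>
     (\<forall>a b c. br a (b + c) = br a b + br a c) \<and> (\<forall>a b r. br a (r *\<^sub>R b) = r *\<^sub>R br a b) \<and>
     (\<forall>a b g. \<rho> (H a b (g::'e)) = (\<lambda>_. 0)) \<and>
     (\<forall>p q1 q2. br p (br q1 q2) = br (br p q1) q2 + br q1 (br p q2) + H p q1 q2) \<and>
     (\<forall>p f q. br p (sm f q) = sm (\<rho> p f) q + sm f (br p q)) \<and>
     DH_zero br H"

definition lin_on :: "'a::real_vector set \<Rightarrow> ('a \<Rightarrow> 'b::real_vector) \<Rightarrow> bool" where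
  "lin_on A f \<longleftrightarrow> (\<forall>x\<in>A. \<forall>y\<in>A. f (x + y) = f x + f y) \<and> (\<forall>x\<in>A. \<forall>c. f (c *\<^sub>R x) = c *\<^sub>R f x)"

definition real_subspace :: "'a::real_vector set \<Rightarrow> bool" where
  "real_subspace A \<longleftrightarrow> 0 \<in> A \<and> (\<forall>x\<in>A. \<forall>y\<in>A. x + y \<in> A) \<and> (\<forall>x\<in>A. \<forall>c. c *\<^sub>R x \<in> A)"

definition two_term_Linfty ::
  "'a::real_vector set \<Rightarrow> 'b::real_vector set \<Rightarrow> ('a \<Rightarrow> 'b) \<Rightarrow> ('b \<Rightarrow> 'b \<Rightarrow> 'b)
   \<Rightarrow> ('b \<Rightarrow> 'a \<Rightarrow> 'a) \<Rightarrow> ('b \<Rightarrow> 'b \<Rightarrow> 'b \<Rightarrow> 'a) \<Rightarrow> bool" where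
  "two_term_Linfty V1 V0 d l2 tr l3 \<longleftrightarrow>
     real_subspace V1 \<and> real_subspace V0 \<and>
     (\<forall>f\<in>V1. d f \<in> V0) \<and> lin_on V1 d \<and>
     (\<forall>x\<in>V0. \<forall>y\<in>V0. l2 x y \<in> V0) \<and>
     (\<forall>x\<in>V0. lin_on V0 (l2 x)) \<and> (\<forall>x\<in>V0. \<forall>y\<in>V0. l2 x y = - l2 y x) \<and>
     (\<forall>x\<in>V0. \<forall>f\<in>V1. tr x f \<in> V1) \<and>
     (\<forall>x\<in>V0. lin_on V1 (tr x)) \<and> (\<forall>f\<in>V1. lin_on V0 (\<lambda>x. tr x f)) \<and>
     (\<forall>x\<in>V0. \<forall>y\<in>V0. \<forall>z\<in>V0. l3 x y z \<in> V1) \<and>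
     (\<forall>x\<in>V0. \<forall>y\<in>V0. lin_on V0 (l3 x y)) \<and>
     (\<forall>x\<in>V0. \<forall>y\<in>V0. \<forall>z\<in>V0. l3 x y z = - l3 y x z \<and> l3 x y z = - l3 x z y) \<and>
     \<comment> \<open>(a)\<close>
     (\<forall>x\<in>V0. \<forall>f\<in>V1. l2 x (d f) = d (tr x f)) \<and>
     \<comment> \<open>(b)\<close>
     (\<forall>f\<in>V1. \<forall>g\<in>V1. tr (d f) g + tr (d g) f = 0) \<and>
     \<comment> \<open>(c)\<close>
     (\<forall>x\<in>V0. \<forall>y\<in>V0. \<forall>z\<in>V0.
        l2 x (l2 y z) + l2 y (l2 z x) + l2 z (l2 x y) = d (l3 x y z)) \<and>
     \<comment> \<open>(d)\<close>
     (\<forall>x\<in>V0. \<forall>y\<in>V0. \<forall>f\<in>V1.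
        tr x (tr y f) - tr y (tr x f) - tr (l2 x y) f = l3 x y (d f)) \<and>
     \<comment> \<open>(e)\<close>
     (\<forall>p0\<in>V0. \<forall>p1\<in>V0. \<forall>p2\<in>V0. \<forall>p3\<in>V0.
        tr p0 (l3 p1 p2 p3) - tr p1 (l3 p0 p2 p3) + tr p2 (l3 p0 p1 p3) - tr p3 (l3 p0 p1 p2)
        - l3 (l2 p0 p1) p2 p3 + l3 (l2 p0 p2) p1 p3 - l3 (l2 p0 p3) p1 p2
        - l3 (l2 p1 p2) p0 p3 + l3 (l2 p1 p3) p0 p2 - l3 (l2 p2 p3) p0 p1 = 0)"

end

theory Submission
  imports Defs
begin

theorem proposition3p6:
  fixes sm :: "'f::{comm_ring_1,real_algebra_1} \<Rightarrow> 'e::real_vector \<Rightarrow> 'e"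
    and \<rho> :: "'e \<Rightarrow> 'f \<Rightarrow> 'f"
    and br :: "'e \<Rightarrow> 'e \<Rightarrow> 'e"
    and H :: "'e \<Rightarrow> 'e \<Rightarrow> 'e \<Rightarrow> 'e"
  assumes "H_twisted_Lie_algebroid sm \<rho> br H"
    and vector_bundle_nondeg: "\<And>e. (\<forall>g \<psi>. sm (\<rho> e g) \<psi> = 0) \<Longrightarrow> \<rho> e = (\<lambda>_. 0)"
  shows "two_term_Linfty {\<psi>. \<rho> \<psi> = (\<lambda>_. 0)} UNIV id br (\<lambda>\<phi> \<psi>. br \<phi> \<psi>) H"
proof -
  note A = assms(1)[unfolded H_twisted_Lie_algebroid_def]
  have fm: "fmodule sm" and an: "anchor_map sm \<rho>" and t3: "tensor3_alt sm H" using A by auto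
  have anti: "\<And>a b. br a b = - br b a" using A by blast
  have badd: "\<And>a b c. br a (b + c) = br a b + br a c" using A by blast
  have bsc: "\<And>a b r. br a (r *\<^sub>R b) = r *\<^sub>R br a b" using A by blast
  have rH: "\<And>a b g. \<rho> (H a b g) = (\<lambda>_. 0)" using A by blast
  have jac: "\<And>p q1 q2. br p (br q1 q2) = br (br p q1) q2 + br q1 (br p q2) + H p q1 q2" using A by blast
  have leib: "\<And>p f q. br p (sm f q) = sm (\<rho> p f) q + sm f (br p q)" using A by blast
  have DH: "DH_zero br H" using A by blast
  have smadd: "\<And>f g e. sm (f + g) e = sm f e + sm g e" and smadd2: "\<And>f e e'. sm f (e + e') = sm f e + sm f e'"
    and smr: "\<And>c e. sm (of_real c) e = c *\<^sub>R e" using fm unfolding fmodule_def by blast+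
  have rder: "\<And>e. is_derivation (\<rho> e)" and radd: "\<And>e e' g. \<rho> (e + e') g = \<rho> e g + \<rho> e' g"
    and rsm: "\<And>f e g. \<rho> (sm f e) g = f * \<rho> e g" using an unfolding anchor_map_def by blast+
  have r0: "\<And>e. \<rho> e 0 = 0"
  proof -
    fix e have "\<rho> e (0 + 0) = \<rho> e 0 + \<rho> e 0" using rder[of e] unfolding is_derivation_def by blast
    thus "\<rho> e 0 = 0" by simp
  qed
  have rzero: "\<rho> 0 = (\<lambda>_. 0)"
  proof
    fix g have "\<rho> (0 + 0) g = \<rho> 0 g + \<rho> 0 g" by (rule radd)
    thus "\<rho> 0 g = 0" by simp
  qed
  have Hanti1: "\<And>a b c. H a b c = - H b a c" and Hanti2: "\<And>a b c. H a b c = - H a c b"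
    and Hadd: "\<And>a b c d. H a b (c + d) = H a b c + H a b d"
    and Hsm: "\<And>f a b c. H a b (sm f c) = sm f (H a b c)" using t3 unfolding tensor3_alt_def by blast+
  let ?V1 = "{\<psi>. \<rho> \<psi> = (\<lambda>_. 0)}"
  have key: "\<rho> (br p q) = (\<lambda>_. 0)" if q: "\<rho> q = (\<lambda>_. 0)" for p q
  proof (rule vector_bundle_nondeg, intro allI)
    fix f q2
    have e1: "br p (br q (sm f q2)) = sm (\<rho> p (\<rho> q f)) q2 + sm (\<rho> q f) (br p q2)
        + (sm (\<rho> p f) (br q q2) + sm f (br p (br q q2)))"
      by (simp add: leib badd)
    have e2: "br (br p q) (sm f q2) + br q (br p (sm f q2)) + H p q (sm f q2)
       = sm (\<rho> (br p q) f) q2 + sm f (br (br p q) q2)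
        + (sm (\<rho> q (\<rho> p f)) q2 + sm (\<rho> q f) (br p q2) + (sm (\<rho> p f) (br q q2) + sm f (br q (br p q2))))
        + sm f (H p q q2)"
      by (simp add: leib badd Hsm)
    have e3: "sm f (br p (br q q2)) = sm f (br (br p q) q2) + sm f (br q (br p q2)) + sm f (H p q q2)"
      using jac[of p q q2] by (simp add: smadd2)
    have sm0: "\<And>e. sm 0 e = 0" by (metis add_0_right add_left_cancel smadd add.right_neutral)
    have qf: "\<rho> q f = 0" "\<rho> p (\<rho> q f) = 0" "\<rho> q (\<rho> p f) = 0" using q r0 by auto
    have J: "br p (br q (sm f q2)) = br (br p q) (sm f q2) + br q (br p (sm f q2)) + H p q (sm f q2)"
      by (rule jac)
    have "sm (\<rho> p f) (br q q2) + sm f (br p (br q q2)) =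
       sm (\<rho> (br p q) f) q2 + sm f (br (br p q) q2)
        + (sm (\<rho> p f) (br q q2) + sm f (br q (br p q2))) + sm f (H p q q2)"
    proof -
      have "sm (\<rho> p f) (br q q2) + sm f (br p (br q q2)) = br p (br q (sm f q2))"
        using e1 by (simp add: qf r0 sm0)
      also have "\<dots> = sm (\<rho> (br p q) f) q2 + sm f (br (br p q) q2)
        + (sm (\<rho> q (\<rho> p f)) q2 + sm (\<rho> q f) (br p q2) + (sm (\<rho> p f) (br q q2) + sm f (br q (br p q2))))
        + sm f (H p q q2)" using J e2 by simp
      also have "\<dots> = sm (\<rho> (br p q) f) q2 + sm f (br (br p q) q2)
        + (sm (\<rho> p f) (br q q2) + sm f (br q (br p q2))) + sm f (H p q q2)"
        by (simp add: qf sm0)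
      finally show ?thesis .
    qed
    hence "sm (\<rho> (br p q) f) q2 = 0" unfolding e3 by (simp add: algebra_simps)
    thus "sm (\<rho> (br p q) f) q2 = 0" .
  qed
  have sub1: "real_subspace ?V1"
    unfolding real_subspace_def
  proof (intro conjI ballI allI)
    show "0 \<in> ?V1" using rzero by simp
  next
    fix x y assume "x \<in> ?V1" "y \<in> ?V1" thus "x + y \<in> ?V1" by (auto simp: radd)
  next
    fix x c assume "x \<in> ?V1" thus "c *\<^sub>R x \<in> ?V1" by (auto simp: rsm smr[symmetric] simp del: smr)
  qed
  have sub0: "real_subspace (UNIV::'e set)" by (simp add: real_subspace_def)
  have banti2: "\<And>a b c. br (a + b) c = br a c + br b c"
    by (metis anti badd minus_add_distrib)
  have bsc2: "\<And>a b r. br (r *\<^sub>R a) b = r *\<^sub>R br a b"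
    by (metis anti bsc scaleR_minus_right)
  have Hsc: "\<And>a b c r. H a b (r *\<^sub>R c) = r *\<^sub>R H a b c"
    by (metis Hsm smr)
  have bb: "\<And>f g. br f g + br g f = 0" by (subst anti) simp
  show ?thesis
    unfolding two_term_Linfty_def
  proof (intro conjI)
    show "\<forall>x\<in>UNIV. \<forall>y\<in>UNIV. \<forall>z\<in>UNIV. br x (br y z) + br y (br z x) + br z (br x y) = id (H x y z)"
    proof (intro ballI)
      fix x y z
      have "br (br x y) z = - br z (br x y)" by (rule anti)
      moreover have "br x z = - br z x" by (rule anti)
      hence "br y (br x z) = - br y (br z x)" using bsc[of y "-1" "br z x"] by simp
      note calculation this
      thus "br x (br y z) + br y (br z x) + br z (br x y) = id (H x y z)"
        using jac[of x y z] by (simp add: algebra_simps)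
    qed
  next
    show "\<forall>x\<in>UNIV. \<forall>y\<in>UNIV. \<forall>f\<in>?V1. br x (br y f) - br y (br x f) - br (br x y) f = H x y (id f)"
    proof (intro ballI)
      fix x y f show "br x (br y f) - br y (br x f) - br (br x y) f = H x y (id f)"
        using jac[of x y f] by (simp add: algebra_simps)
    qed
  next
    show "\<forall>p0\<in>UNIV. \<forall>p1\<in>UNIV. \<forall>p2\<in>UNIV. \<forall>p3\<in>UNIV.
        br p0 (H p1 p2 p3) - br p1 (H p0 p2 p3) + br p2 (H p0 p1 p3) - br p3 (H p0 p1 p2)
        - H (br p0 p1) p2 p3 + H (br p0 p2) p1 p3 - H (br p0 p3) p1 p2
        - H (br p1 p2) p0 p3 + H (br p1 p3) p0 p2 - H (br p2 p3) p0 p1 = 0"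
      using DH unfolding DH_zero_def by blast
  qed (simp_all add: lin_on_def badd bsc banti2 bsc2 Hadd Hsc rH key sub1 sub0 bb,
       (intro allI impI conjI; (rule anti | rule Hanti1 | rule Hanti2))+)
qed

end
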